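(* The identity map on generators induces algebra isomorphisms $U^{22}_{K,L,norm}\cong U^{31}_{K,L,norm}$ and $U^{22}_{K,L,twist}\cong U^{31}_{K,L,twist}$.
   Context: Fix $q\in\mathbb{C}$, $q\neq0,\pm1$. $U^{22}_{K+L}$ is the unital associative $\mathbb{C}$-algebra generated by $K,\overline{K},L,\overline{L},E,F$ subject to: $K\overline{K}K=K$, $\overline{K}K\overline{K}=\overline{K}$, $K\overline{K}=\overline{K}K$, $L\overline{L}L=L$, $\overline{L}L\overline{L}=\overline{L}$, $L\overline{L}=\overline{L}L$, $K\overline{K}+L\overline{L}=\mathbf{1}$, and, writing $\mathcal{K}=K+L$, $\overline{\mathcal{K}}=\overline{K}+\overline{L}$: $\mathcal{K}E=q^2E\mathcal{K}$, $\overline{\mathcal{K}}E=q^{-2}E\overline{\mathcal{K}}$, $\mathcal{K}F=q^{-2}F\mathcal{K}$, $\overline{\mathcal{K}}F=q^{2}F\overline{\mathcal{K}}$, $EF-FE=(\mathcal{K}-\overline{\mathcal{K}})/(q-q^{-1})$. $U^{31}_{K+L}$ has the same generators and first seven relations together with $\mathcal{K}E\overline{\mathcal{K}}=q^2E$, $\overline{\mathcal{K}}E\mathcal{K}=q^{-2}E$, $\mathcal{K}F\overline{\mathcal{K}}=q^{-2}F$, $\overline{\mathcal{K}}F\mathcal{K}=q^{2}F$, $EF-FE=(\mathcal{K}-\overline{\mathcal{K}})/(q-q^{-1})$. Let $P=K\overline{K}$, $Q=L\overline{L}$. For $s\in\{22,31\}$, $U^{s}_{K,L,norm}$ is the quotient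 of $U^{s}_{K+L}$ by the two-sided ideal generated by $PE-EP$, $QE-EQ$, $PF-FP$, $QF-FQ$, and $U^{s}_{K,L,twist}$ is the quotient of $U^{s}_{K+L}$ by the two-sided ideal generated by $PE-EQ$, $QE-EP$, $PF-FQ$, $QF-FP$. *)

theory Defs
  imports Complex_Main
begin

text \<open>A unital associative complex algebra is a ring with unit together with a
  unital ring homomorphism from the complex numbers into its centre (scalars).\<close>
definition calg_struct :: "(complex \<Rightarrow> 'a::ring_1) \<Rightarrow> bool" where
  "calg_struct s \<longleftrightarrow> (\<forall>a b. s (a + b) = s a + s b) \<and> (\<forall>a b. s (a * b) = s a * s b)
     \<and> s 1 = 1 \<and> (\<forall>a x. s a * x = x * s a)"

definition base_rels :: "'a::ring_1 \<Rightarrow> 'a \<Rightarrow> 'a \<Rightarrow> 'a \<Rightarrow> bool" where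
  "base_rels K Kb L Lb \<longleftrightarrow>
     K * Kb * K = K \<and> Kb * K * Kb = Kb \<and> K * Kb = Kb * K \<and>
     L * Lb * L = L \<and> Lb * L * Lb = Lb \<and> L * Lb = Lb * L \<and>
     K * Kb + L * Lb = 1"

definition rels22 :: "(complex \<Rightarrow> 'a::ring_1) \<Rightarrow> complex \<Rightarrow> 'a \<Rightarrow> 'a \<Rightarrow> 'a \<Rightarrow> 'a \<Rightarrow> 'a \<Rightarrow> 'a \<Rightarrow> bool" where
  "rels22 s q K Kb L Lb E F \<longleftrightarrow> base_rels K Kb L Lb \<and>
     (let C = K + L; Cb = Kb + Lb in
       C * E = s (q^2) * E * C \<and> Cb * E = s (inverse q ^ 2) * E * Cb \<and>
       C * F = s (inverse q ^ 2) * F * C \<and> Cb * F = s (q^2) * F * Cb \<and>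
       E * F - F * E = s (inverse (q - inverse q)) * (C - Cb))"

definition rels31 :: "(complex \<Rightarrow> 'a::ring_1) \<Rightarrow> complex \<Rightarrow> 'a \<Rightarrow> 'a \<Rightarrow> 'a \<Rightarrow> 'a \<Rightarrow> 'a \<Rightarrow> 'a \<Rightarrow> bool" where
  "rels31 s q K Kb L Lb E F \<longleftrightarrow> base_rels K Kb L Lb \<and>
     (let C = K + L; Cb = Kb + Lb in
       C * E * Cb = s (q^2) * E \<and> Cb * E * C = s (inverse q ^ 2) * E \<and>
       C * F * Cb = s (inverse q ^ 2) * F \<and> Cb * F * C = s (q^2) * F \<and>
       E * F - F * E = s (inverse (q - inverse q)) * (C - Cb))"

definition norm_rels :: "'a::ring_1 \<Rightarrow> 'a \<Rightarrow> 'a \<Rightarrow> 'a \<Rightarrow> 'a \<Rightarrow> 'a \<Rightarrow> bool" where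
  "norm_rels K Kb L Lb E F \<longleftrightarrow>
     (let P = K * Kb; Q = L * Lb in
       P * E = E * P \<and> Q * E = E * Q \<and> P * F = F * P \<and> Q * F = F * Q)"

definition twist_rels :: "'a::ring_1 \<Rightarrow> 'a \<Rightarrow> 'a \<Rightarrow> 'a \<Rightarrow> 'a \<Rightarrow> 'a \<Rightarrow> bool" where
  "twist_rels K Kb L Lb E F \<longleftrightarrow>
     (let P = K * Kb; Q = L * Lb in
       P * E = E * Q \<and> Q * E = E * P \<and> P * F = F * Q \<and> Q * F = F * P)"

end

theory Submission
  imports Defs
begin

lemma inv_C:
  fixes K Kb L Lb :: "'a::ring_1"
  assumes "base_rels K Kb L Lb"
  shows "(K + L) * (Kb + Lb) = 1 \<and> (Kb + Lb) * (K + L) = 1"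
proof -
  define P where "P = K * Kb"
  define Q where "Q = L * Lb"
  have r: "K * Kb * K = K" "Kb * K * Kb = Kb" "K * Kb = Kb * K"
          "L * Lb * L = L" "Lb * L * Lb = Lb" "L * Lb = Lb * L" "K * Kb + L * Lb = 1"
    using assms unfolding base_rels_def by auto
  have PQ1: "P + Q = 1" using r(7) by (simp add: P_def Q_def)
  have PP: "P * P = P" using r(1) by (metis P_def mult.assoc)
  have QQ: "Q * Q = Q" using r(4) by (metis Q_def mult.assoc)
  have PQ: "P * Q = 0"
  proof -
    have "P = P * (P + Q)" using PQ1 by simp
    also have "... = P + P * Q" using PP by (simp add: distrib_left)
    finally show ?thesis by simp
  qed
  have QP: "Q * P = 0"
  proof -
    have "Q = Q * (P + Q)" using PQ1 by simp
    also have "... = Q * P + Q" using QQ by (simp add: distrib_left)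
    finally show ?thesis by simp
  qed
  have KP: "K * P = K" using r(1,3) by (metis P_def mult.assoc)
  have PKb: "P * Kb = Kb" using r(2,3) by (metis P_def)
  have KbP: "Kb * P = Kb" using r(2,3) by (metis P_def mult.assoc)
  have PK: "P * K = K" using r(1) by (simp add: P_def)
  have LQ: "L * Q = L" using r(4,6) by (metis Q_def mult.assoc)
  have QLb: "Q * Lb = Lb" using r(5,6) by (metis Q_def)
  have LbQ: "Lb * Q = Lb" using r(5,6) by (metis Q_def mult.assoc)
  have QL: "Q * L = L" using r(4) by (simp add: Q_def)
  have a: "K * Lb = 0"
  proof -
    have "K * Lb = K * P * (Q * Lb)" using KP QLb by simp
    also have "... = K * (P * Q) * Lb" by (simp add: mult.assoc)
    finally show ?thesis using PQ by simp
  qed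
  have b: "L * Kb = 0"
  proof -
    have "L * Kb = L * Q * (P * Kb)" using LQ PKb by simp
    also have "... = L * (Q * P) * Kb" by (simp add: mult.assoc)
    finally show ?thesis using QP by simp
  qed
  have c: "Kb * L = 0"
  proof -
    have "Kb * L = Kb * P * (Q * L)" using KbP QL by simp
    also have "... = Kb * (P * Q) * L" by (simp add: mult.assoc)
    finally show ?thesis using PQ by simp
  qed
  have d: "Lb * K = 0"
  proof -
    have "Lb * K = Lb * Q * (P * K)" using LbQ PK by simp
    also have "... = Lb * (Q * P) * K" by (simp add: mult.assoc)
    finally show ?thesis using QP by simp
  qed
  have "(K + L) * (Kb + Lb) = K * Kb + L * Lb" using a b by (simp add: algebra_simps)
  moreover have "(Kb + Lb) * (K + L) = K * Kb + L * Lb" using c d r(3,6) by (simp add: algebra_simps)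
  ultimately show ?thesis using r(7) by simp
qed

lemma r22_31:
  fixes K Kb L Lb E F :: "'a::ring_1"
  shows "rels22 s q K Kb L Lb E F \<longleftrightarrow> rels31 s q K Kb L Lb E F"
proof (cases "base_rels K Kb L Lb")
  case False thus ?thesis by (simp add: rels22_def rels31_def)
next
  case True
  define C where "C = K + L"
  define Cb where "Cb = Kb + Lb"
  have i: "C * Cb = 1" "Cb * C = 1" using inv_C[OF True] by (auto simp: C_def Cb_def)
  have eq: "\<And>X (c::'a). (C * X = c * X * C \<longleftrightarrow> C * X * Cb = c * X)
      \<and> (Cb * X = c * X * Cb \<longleftrightarrow> Cb * X * C = c * X)"
  proof -
    fix X c :: 'a
    have 1: "C * X = c * X * C \<longleftrightarrow> C * X * Cb = c * X"
    proof
      assume h: "C * X = c * X * C"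
      have "C * X * Cb = c * X * (C * Cb)" by (simp add: h mult.assoc)
      thus "C * X * Cb = c * X" using i by simp
    next
      assume h: "C * X * Cb = c * X"
      have "C * X = C * X * (Cb * C)" using i by simp
      also have "... = (C * X * Cb) * C" by (simp add: mult.assoc)
      finally show "C * X = c * X * C" using h by simp
    qed
    have 2: "Cb * X = c * X * Cb \<longleftrightarrow> Cb * X * C = c * X"
    proof
      assume h: "Cb * X = c * X * Cb"
      have "Cb * X * C = c * X * (Cb * C)" by (simp add: h mult.assoc)
      thus "Cb * X * C = c * X" using i by simp
    next
      assume h: "Cb * X * C = c * X"
      have "Cb * X = Cb * X * (C * Cb)" using i by simp
      also have "... = (Cb * X * C) * Cb" by (simp add: mult.assoc)
      finally show "Cb * X = c * X * Cb" using h by simp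
    qed
    show "(C * X = c * X * C \<longleftrightarrow> C * X * Cb = c * X) \<and> (Cb * X = c * X * Cb \<longleftrightarrow> Cb * X * C = c * X)" using 1 2 by blast
  qed
  show ?thesis unfolding rels22_def rels31_def Let_def C_def[symmetric] Cb_def[symmetric]
    using eq by meson
qed

theorem proposition3:
  fixes q :: complex and s :: "complex \<Rightarrow> 'a::ring_1"
    and K Kb L Lb E F :: 'a
  assumes "q \<noteq> 0" and "q \<noteq> 1" and "q \<noteq> -1" and "calg_struct s"
  shows "(rels22 s q K Kb L Lb E F \<and> norm_rels K Kb L Lb E F \<longleftrightarrow>
          rels31 s q K Kb L Lb E F \<and> norm_rels K Kb L Lb E F) \<and>
         (rels22 s q K Kb L Lb E F \<and> twist_rels K Kb L Lb E F \<longleftrightarrow>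
          rels31 s q K Kb L Lb E F \<and> twist_rels K Kb L Lb E F)"
  using r22_31[of s q K Kb L Lb E F] by blast

end
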